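(* Let $N \ge 0$ and $k \ge 1$ be integers and let $f:\{0,\dots,N\}^k \to \{\mathbf{true},\mathbf{false}\}$ be a feasibility function. Let $\vec x \in \{0,\dots,N\}^k$ with $f(\vec x) = \mathbf{true}$. Then the procedure $\textsc{SearchParetoPoint}(\vec x,k,f)$ returns a Pareto point $\vec z$ of $f$ with $\vec z \le_k \vec x$.
   Context: For $\vec x = (x_1,\dots,x_k), \vec x' = (x'_1,\dots,x'_k) \in \{0,\dots,N\}^k$, write $\vec x \le_k \vec x'$ iff $x_i \le x'_i$ for all $i$; $\vec x$ is smaller than $\vec x'$ if $\vec x \le_k \vec x'$ and $\vec x \ne \vec x'$. A feasibility function is a map $f:\{0,\dots,N\}^k\to\{\mathbf{true},\mathbf{false}\}$ that is monotone: if $f(\vec x)=\mathbf{true}$ then $f(\vec x')=\mathbf{true}$ for every $\vec x'$ greater than $\vec x$. A point $\vec x$ is a Pareto point (Pareto optimum) of $f$ if $f(\vec x)=\mathbf{true}$ and $f(\vec x')=\mathbf{false}$ for every $\vec x'$ smaller than $\vec x$. Procedure $\textsc{SearchParetoPoint}(\vec x,k,f)$: for $i = 1,\dots,k$ in order: set $\mathit{max} := x_i+1$ and $\mathit{min} := 0$; while $\mathit{max}-\mathit{min} > 1$: set $\mathit{mid} := \mathit{min} + \lfloor (\mathit{max}-\mathit{min}-1)/2 \rfloor$, set $x_i := \mathit{mid}$, and if $f(\vec x) = \mathbf{true}$ set $\mathit{max} := \mathit{mid}+1$, otherwise set $\mathit{min} := \mathit{mid}+1$; after the while loop set $x_i :=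 \mathit{min}$. After all $k$ coordinates have been processed, return the current $\vec x$. *)

theory Defs
  imports Main
begin

text \<open>Points of {0,...,N}^k are represented as lists of naturals of length k;
  coordinate x_i (1-based in the paper) is x ! (i-1).\<close>

definition grid :: "nat \<Rightarrow> nat \<Rightarrow> nat list set" where
  "grid N k = {x. length x = k \<and> (\<forall>i<k. x ! i \<le> N)}"

definition leq_k :: "nat \<Rightarrow> nat list \<Rightarrow> nat list \<Rightarrow> bool" where
  "leq_k k x y \<longleftrightarrow> (\<forall>i<k. x ! i \<le> y ! i)"

definition smaller :: "nat \<Rightarrow> nat list \<Rightarrow> nat list \<Rightarrow> bool" where
  "smaller k x y \<longleftrightarrow> leq_k k x y \<and> x \<noteq> y"

definition feasibility_function :: "nat \<Rightarrow> nat \<Rightarrow> (nat list \<Rightarrow> bool) \<Rightarrow> bool" where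
  "feasibility_function N k f \<longleftrightarrow>
     (\<forall>x\<in>grid N k. \<forall>x'\<in>grid N k. f x \<and> smaller k x x' \<longrightarrow> f x')"

definition pareto_point :: "nat \<Rightarrow> nat \<Rightarrow> (nat list \<Rightarrow> bool) \<Rightarrow> nat list \<Rightarrow> bool" where
  "pareto_point N k f x \<longleftrightarrow> x \<in> grid N k \<and> f x \<and>
     (\<forall>x'\<in>grid N k. smaller k x' x \<longrightarrow> \<not> f x')"

text \<open>The inner while loop of SearchParetoPoint for coordinate i, with state
  (x, min, max).\<close>
function search_coord :: "(nat list \<Rightarrow> bool) \<Rightarrow> nat \<Rightarrow> nat list \<Rightarrow> nat \<Rightarrow> nat \<Rightarrow> nat list" where
  "search_coord f i x mn mx =
     (if mx - mn > 1 then
        (let mid = mn + (mx - mn - 1) div 2; x' = x[i := mid] in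
         if f x' then search_coord f i x' mn (mid + 1)
         else search_coord f i x' (mid + 1) mx)
      else x[i := mn])"
  by pat_completeness auto
termination
  by (relation "measure (\<lambda>(f, i, x, mn, mx). mx - mn)") auto

definition search_pareto_point :: "nat list \<Rightarrow> nat \<Rightarrow> (nat list \<Rightarrow> bool) \<Rightarrow> nat list" where
  "search_pareto_point x k f =
     foldl (\<lambda>y i. search_coord f i y 0 (y ! i + 1)) x [0..<k]"

end

theory Submission
  imports Defs
begin

lemma nthu: "ia < length x \<Longrightarrow> x[i:=v]!ia = (if ia = i then v else x!ia)"
  by (cases "ia = i") auto

lemma fmono:
  assumes "feasibility_function N k f" "a \<in> grid N k" "b \<in> grid N k" "leq_k k a b" "f a"
  shows "f b"
  using assms unfolding feasibility_function_def smaller_def by blast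

lemma upd_grid:
  assumes "x \<in> grid N k" "v \<le> N"
  shows "x[i := v] \<in> grid N k"
  using assms unfolding grid_def by (auto simp: nthu)

lemma sc:
  assumes "feasibility_function N k f" "x \<in> grid N k" "i < k" "mn < mx" "mx \<le> N + 1"
    "f (x[i := mx - 1])" "\<forall>u<mn. \<not> f (x[i := u])"
  shows "\<exists>v. search_coord f i x mn mx = x[i := v] \<and> mn \<le> v \<and> v < mx
     \<and> f (x[i := v]) \<and> (\<forall>u<v. \<not> f (x[i := u]))"
  using assms
proof (induction f i x mn mx rule: search_coord.induct)
  case (1 f i x mn mx)
  show ?case
  proof (cases "mx - mn > 1")
    case False
    then have "mn = mx - 1" using 1 by auto
    then show ?thesis using 1(3-9) False by (subst search_coord.simps) (simp del: search_coord.simps, blast)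
  next
    case True
    define mid where "mid = mn + (mx - mn - 1) div 2"
    have mid: "mn \<le> mid" "mid < mx" "mid \<le> N" using True 1(3-9) unfolding mid_def by auto
    have unf: "search_coord f i x mn mx = (if f (x[i:=mid]) then search_coord f i (x[i:=mid]) mn (mid + 1)
         else search_coord f i (x[i:=mid]) (mid + 1) mx)"
      using True by (subst search_coord.simps) (simp only: Let_def mid_def if_True)
    have eqs: "\<And>v. (x[i:=mid])[i:=v] = x[i:=v]" by simp
    have gx': "x[i:=mid] \<in> grid N k" using upd_grid[OF 1(4) mid(3)] .
    show ?thesis
    proof (cases "f (x[i:=mid])")
      case T: True
      have "\<exists>v. search_coord f i (x[i:=mid]) mn (mid+1) = (x[i:=mid])[i := v] \<and> mn \<le> v \<and> v < mid+1
     \<and> f ((x[i:=mid])[i := v]) \<and> (\<forall>u<v. \<not> f ((x[i:=mid])[i := u]))"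
        apply (rule 1(1)[OF True mid_def refl T])
        using 1(3-9) mid T gx' by (auto simp: eqs simp del: search_coord.simps)
      then show ?thesis using True T mid unfolding eqs
        by (simp add: unf del: search_coord.simps) (use mid(2) in \<open>fastforce\<close>)
    next
      case F: False
      have lowf: "\<forall>u<mid+1. \<not> f (x[i := u])"
      proof (intro allI impI)
        fix u assume u: "u < mid + 1"
        show "\<not> f (x[i := u])"
        proof (cases "u < mn")
          case True then show ?thesis using 1(9) by auto
        next
          case False
          show ?thesis
          proof
            assume "f (x[i := u])"
            moreover have "x[i:=u] \<in> grid N k" using upd_grid[OF 1(4)] u mid by auto
            moreover have "leq_k k (x[i:=u]) (x[i:=mid])" using u 1(4)
              unfolding leq_k_def grid_def by (auto simp: nthu)
            ultimately have "f (x[i:=mid])" using fmono[OF 1(3) _ gx'] by blast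
            then show False using F by simp
          qed
        qed
      qed
      have mlt: "mid + 1 < mx"
      proof (rule ccontr)
        assume "\<not> mid + 1 < mx"
        then have "mid = mx - 1" using mid by linarith
        then show False using F 1(8) by simp
      qed
      have "\<exists>v. search_coord f i (x[i:=mid]) (mid+1) mx = (x[i:=mid])[i := v] \<and> mid+1 \<le> v \<and> v < mx
     \<and> f ((x[i:=mid])[i := v]) \<and> (\<forall>u<v. \<not> f ((x[i:=mid])[i := u]))"
        apply (rule 1(2)[OF True mid_def refl F])
        using 1(3-9) mid F gx' lowf True mlt by (auto simp: eqs simp del: search_coord.simps)
      then show ?thesis using True F mid unfolding eqs
        by (simp add: unf del: search_coord.simps) (use mid(1) in \<open>fastforce\<close>)
    qed
  qed
qed

lemma outer:
  assumes ff: "feasibility_function N k f" and gx: "x \<in> grid N k" and fx: "f x" and "j \<le> k"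
  shows "let y = foldl (\<lambda>y i. search_coord f i y 0 (y ! i + 1)) x [0..<j] in
     y \<in> grid N k \<and> f y \<and> leq_k k y x \<and> (\<forall>i<j. \<forall>u<y!i. \<not> f (y[i:=u]))"
  using assms(4)
proof (induction j)
  case 0
  then show ?case using gx fx by (simp add: leq_k_def)
next
  case (Suc j)
  define y where "y = foldl (\<lambda>y i. search_coord f i y 0 (y ! i + 1)) x [0..<j]"
  have IH: "y \<in> grid N k" "f y" "leq_k k y x" "\<forall>i<j. \<forall>u<y!i. \<not> f (y[i:=u])"
    using Suc y_def by (auto simp: Let_def)
  have jk: "j < k" using Suc by simp
  have lenk: "length y = k" using IH(1) by (simp add: grid_def)
  have yjN: "y ! j \<le> N" using IH(1) jk by (simp add: grid_def)
  obtain v where v: "search_coord f j y 0 (y!j+1) = y[j:=v]" "v < y!j+1"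
     "f (y[j:=v])" "\<forall>u<v. \<not> f (y[j:=u])"
    using sc[OF ff IH(1) jk, of 0 "y!j+1"] yjN IH(2) lenk jk by auto
  define y' where "y' = y[j:=v]"
  have g': "y' \<in> grid N k" using upd_grid[OF IH(1)] v yjN y'_def by auto
  have le': "leq_k k y' y" using v(2) lenk unfolding leq_k_def y'_def by (auto simp: nthu)
  have "\<forall>i<Suc j. \<forall>u<y'!i. \<not> f (y'[i:=u])"
  proof (intro allI impI notI)
    fix i u assume i: "i < Suc j" and u: "u < y'!i" and fu: "f (y'[i:=u])"
    show False
    proof (cases "i = j")
      case True
      then show ?thesis using v u fu lenk jk unfolding y'_def by auto
    next
      case False
      then have ij: "i < j" using i by simp
      have "y'!i = y!i" using False unfolding y'_def by simp
      have "y!i \<le> N" using IH(1) ij jk by (auto simp: grid_def)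
      then have uN: "u \<le> N" using u \<open>y'!i = y!i\<close> by linarith
      have "leq_k k (y'[i:=u]) (y[i:=u])" using le' lenk g'
        unfolding leq_k_def by (auto simp: nthu grid_def)
      then have "f (y[i:=u])" using fmono[OF ff upd_grid[OF g' uN] upd_grid[OF IH(1) uN]] fu by blast
      then show False using IH(4) ij u \<open>y'!i = y!i\<close> by auto
    qed
  qed
  moreover have "leq_k k y' x" using le' IH(3) unfolding leq_k_def by (meson order_trans)
  ultimately show ?case using g' v y'_def y_def by (simp add: Let_def)
qed

theorem lemma1:
  fixes N k :: nat and f :: "nat list \<Rightarrow> bool" and x :: "nat list"
  assumes "k \<ge> 1"
    and "feasibility_function N k f"
    and "x \<in> grid N k"
    and "f x"
  shows "pareto_point N k f (search_pareto_point x k f)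
         \<and> leq_k k (search_pareto_point x k f) x"
proof -
  define y where "y = search_pareto_point x k f"
  have P: "y \<in> grid N k" "f y" "leq_k k y x" "\<forall>i<k. \<forall>u<y!i. \<not> f (y[i:=u])"
    using outer[OF assms(2,3,4) order_refl] unfolding y_def search_pareto_point_def
    by (auto simp: Let_def)
  have "\<forall>z\<in>grid N k. smaller k z y \<longrightarrow> \<not> f z"
  proof (intro ballI impI notI)
    fix z assume gz: "z \<in> grid N k" and sm: "smaller k z y" and fz: "f z"
    have len: "length z = k" "length y = k" using gz P(1) by (auto simp: grid_def)
    obtain i where i: "i < k" "z!i \<noteq> y!i"
      using sm len unfolding smaller_def by (metis nth_equalityI)
    have lt: "z!i < y!i" using i sm unfolding smaller_def leq_k_def by (meson le_neq_implies_less)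
    have zN: "z!i \<le> N" using gz i by (simp add: grid_def)
    have "leq_k k z (y[i:=z!i])" using sm len unfolding smaller_def leq_k_def
      by (auto simp: nthu)
    then have "f (y[i:=z!i])" using fmono[OF assms(2) gz upd_grid[OF P(1) zN]] fz by blast
    then show False using P(4) i lt by blast
  qed
  then show ?thesis using P unfolding pareto_point_def y_def by blast
qed

end
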